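(* Let $Y,W$ be metric spaces, $\psi\colon Y\to W$ continuous, $\rho\colon Y\to[0,\infty]$ Borel, and $\gamma\colon[0,1]\to Y$ an absolutely continuous path with $\int_\gamma\rho\,ds<\infty$. Suppose $E\subset Y$ is compact with $\mathcal{H}^1_W(\psi(E))=0$ and that $\ell(\psi\circ\gamma|_I)\le\int_{\gamma|_I}\rho\,ds$ for every closed interval $I\subset[0,1]\setminus\gamma^{-1}(E)$. Then $\ell(\psi\circ\gamma)\le\int_\gamma\rho\,ds$.
   Context: $\ell$ denotes the length of a path (supremum over partitions of sums of distances). The metric speed of a path $\gamma$ is $v_\gamma(t)=\lim_{s\to t}d(\gamma(s),\gamma(t))/|s-t|$ where it exists. A rectifiable path $\gamma\colon[a,b]\to Y$ is absolutely continuous if $v_\gamma\in L^1$ and $d(\gamma(t),\gamma(s))\le\int_s^tv_\gamma$ for $s\le t$. For absolutely continuous $\gamma$ and Borel $\rho\ge0$, $\int_\gamma\rho\,ds=\int_a^b(\rho\circ\gamma)v_\gamma\,dt$. $\mathcal{H}^1_W$ is the 1-dimensional Hausdorff measure on $W$. *)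

theory Defs
  imports "HOL-Analysis.Analysis"
begin

definition ediam :: "'a::metric_space set \<Rightarrow> ennreal" where
  "ediam A = (SUP x\<in>A. SUP y\<in>A. ennreal (dist x y))"

definition hausdorff1_pre :: "real \<Rightarrow> 'a::metric_space set \<Rightarrow> ennreal" where
  "hausdorff1_pre \<delta> A =
     (INF C \<in> {C :: nat \<Rightarrow> 'a set. A \<subseteq> (\<Union>i. C i) \<and> (\<forall>i. ediam (C i) \<le> ennreal \<delta>)}.
        (\<Sum>i. ediam (C i)))"

definition hausdorff1 :: "'a::metric_space set \<Rightarrow> ennreal" where
  "hausdorff1 A = (SUP \<delta>\<in>{0<..}. hausdorff1_pre \<delta> A)"

definition path_length :: "(real \<Rightarrow> 'a::metric_space) \<Rightarrow> real \<Rightarrow> real \<Rightarrow> ennreal" where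
  "path_length g a b =
     (SUP ts \<in> {ts. ts \<noteq> [] \<and> hd ts = a \<and> last ts = b \<and> sorted ts}.
        (\<Sum>i<length ts - 1. ennreal (dist (g (ts ! i)) (g (ts ! Suc i)))))"

text \<open>Metric speed of the path g on [a,b] at t (meaningful where the limit exists).\<close>
definition metric_speed :: "(real \<Rightarrow> 'a::metric_space) \<Rightarrow> real \<Rightarrow> real \<Rightarrow> real \<Rightarrow> real" where
  "metric_speed g a b t = Lim (at t within {a..b}) (\<lambda>s. dist (g s) (g t) / \<bar>s - t\<bar>)"

definition abs_continuous_path :: "(real \<Rightarrow> 'a::metric_space) \<Rightarrow> real \<Rightarrow> real \<Rightarrow> bool" where
  "abs_continuous_path g a b \<longleftrightarrow>
     path_length g a b < \<infinity> \<and>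
     set_integrable lebesgue {a..b} (metric_speed g a b) \<and>
     (\<forall>s t. a \<le> s \<longrightarrow> s \<le> t \<longrightarrow> t \<le> b \<longrightarrow>
        dist (g t) (g s) \<le> (LINT x:{s..t}|lebesgue. metric_speed g a b x))"

definition line_integral :: "('a::metric_space \<Rightarrow> ennreal) \<Rightarrow> (real \<Rightarrow> 'a) \<Rightarrow> real \<Rightarrow> real \<Rightarrow> ennreal" where
  "line_integral \<rho> g a b =
     (\<integral>\<^sup>+ t \<in> {a..b}. \<rho> (g t) * ennreal (metric_speed g a b t) \<partial>lebesgue)"

end

theory Submission imports Defs begin

lemma countable_components_real:
  fixes U :: "real set" assumes "open U"
  shows "countable (components U)"
proof -
  have "components U \<subseteq> (\<lambda>q. connected_component_set U q) ` \<rat>"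
  proof
    fix C assume C: "C \<in> components U"
    then have "open C" "C \<noteq> {}" using assms open_components in_components_nonempty by auto
    then obtain x where "x \<in> C" by blast
    then obtain e where "e > 0" "ball x e \<subseteq> C" using \<open>open C\<close> open_contains_ball by blast
    note xe = \<open>x \<in> C\<close> this
    obtain q where q: "q \<in> \<rat>" "x < q" "q < x + e" using Rats_dense_in_real[of x "x+e"] xe by auto
    then have "q \<in> ball x e" by (simp add: dist_real_def)
    then have "q \<in> C" using xe by blast
    obtain x0 where x0: "x0 \<in> U" "C = connected_component_set U x0" using C components_iff by blast
    then have "C = connected_component_set U q" using connected_component_eq[of q U x0] \<open>q \<in> C\<close> by simp
    then show "C \<in> (\<lambda>q. connected_component_set U q) ` \<rat>" using q by auto
  qed
  then show ?thesis by (rule countable_subset[OF _ countable_image[OF countable_rat]])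
qed

lemma open_real_disjoint_family:
  fixes U :: "real set" assumes "open U"
  obtains X :: "nat \<Rightarrow> real set" where "disjoint_family X" "(\<Union>i. X i) = U"
    "\<And>i. X i = {} \<or> X i \<in> components U"
proof -
  let ?C = "components U"
  have cC: "countable ?C" using countable_components_real[OF assms] .
  define X where "X n = (if n \<in> to_nat_on ?C ` ?C then from_nat_into ?C n else {})" for n
  have XC: "X i = {} \<or> X i \<in> components U" for i
    unfolding X_def using cC by auto
  have "disjoint_family X"
    unfolding disjoint_family_on_def
  proof (intro ballI impI)
    fix m n :: nat assume "m \<noteq> n"
    show "X m \<inter> X n = {}"
    proof (cases "m \<in> to_nat_on ?C ` ?C \<and> n \<in> to_nat_on ?C ` ?C")
      case True
      then obtain A B where AB: "A \<in> ?C" "B \<in> ?C" "m = to_nat_on ?C A" "n = to_nat_on ?C B" by auto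
      then have "A \<noteq> B" using \<open>m \<noteq> n\<close> by auto
      then show ?thesis using AB cC unfolding X_def
        by (simp add: components_nonoverlap)
    next
      case False then show ?thesis unfolding X_def by auto
    qed
  qed
  moreover have "(\<Union>i. X i) = U"
  proof
    show "(\<Union>i. X i) \<subseteq> U"
    proof (rule UN_least)
      fix i show "X i \<subseteq> U" using XC[of i] in_components_subset[of "X i" U] by auto
    qed
    show "U \<subseteq> (\<Union>i. X i)"
    proof
      fix x assume "x \<in> U"
      then obtain A where "A \<in> ?C" "x \<in> A" using Union_components[of U] by blast
      then have "X (to_nat_on ?C A) = A" unfolding X_def using cC by auto
      then show "x \<in> (\<Union>i. X i)" using \<open>x \<in> A\<close> by blast
    qed
  qed
  ultimately show ?thesis using that XC by blast
qed

lemma acp_continuous: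
  fixes g :: "real \<Rightarrow> 'a::metric_space"
  assumes "abs_continuous_path g a b"
  shows "continuous_on {a..b} g"
proof -
  let ?v = "metric_speed g a b"
  have si: "set_integrable lebesgue {a..b} ?v"
    and db: "\<And>s t. a \<le> s \<Longrightarrow> s \<le> t \<Longrightarrow> t \<le> b \<Longrightarrow> dist (g t) (g s) \<le> (LINT x:{s..t}|lebesgue. ?v x)"
    using assms unfolding abs_continuous_path_def by auto
  have int: "?v integrable_on {a..b}" using set_lebesgue_integral_eq_integral(1)[OF si] .
  define I where "I x = integral {a..x} ?v" for x
  have cI: "continuous_on {a..b} I" unfolding I_def by (rule indefinite_integral_continuous_1[OF int])
  have key: "dist (g t) (g s) \<le> dist (I t) (I s)" if "a \<le> s" "s \<le> t" "t \<le> b" for s t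
  proof -
    have "set_integrable lebesgue {s..t} ?v" by (rule set_integrable_subset[OF si]) (use that in auto)
    then have "(LINT x:{s..t}|lebesgue. ?v x) = integral {s..t} ?v"
      using set_lebesgue_integral_eq_integral(2) by blast
    also have "\<dots> = I t - I s"
    proof -
      have "?v integrable_on {a..t}" using integrable_on_subinterval[OF int, of a t] that by auto
      then have "integral {a..s} ?v + integral {s..t} ?v = integral {a..t} ?v"
        using Henstock_Kurzweil_Integration.integral_combine[where a=a and c=s and b=t] that by auto
      then show ?thesis unfolding I_def by simp
    qed
    finally show ?thesis using db[OF that] by (simp add: dist_real_def)
  qed
  have key2: "dist (g t) (g s) \<le> dist (I t) (I s)" if "s \<in> {a..b}" "t \<in> {a..b}" for s t
  proof (cases "s \<le> t")
    case True then show ?thesis using key that by auto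
  next
    case False then show ?thesis using key[of t s] that by (auto simp: dist_commute)
  qed
  show ?thesis unfolding continuous_on_iff
  proof (intro ballI allI impI)
    fix x e :: real assume x: "x \<in> {a..b}" and e: "0 < e"
    obtain d where "d > 0" "\<forall>x'\<in>{a..b}. dist x' x < d \<longrightarrow> dist (I x') (I x) < e"
      using cI x e unfolding continuous_on_iff by blast
    then show "\<exists>d>0. \<forall>x'\<in>{a..b}. dist x' x < d \<longrightarrow> dist (g x') (g x) < e"
      using key2 x by (meson le_less_trans)
  qed
qed

lemma speed_local:
  assumes "a \<le> c" "d \<le> b" "u \<in> {c<..<d}"
  shows "metric_speed g c d u = metric_speed g a b u"
proof -
  have "at u within {c..d} = at u" by (rule at_within_interior) (use assms in simp)
  moreover have "at u within {a..b} = at u" by (rule at_within_interior) (use assms in simp)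
  ultimately show ?thesis unfolding metric_speed_def by simp
qed

lemma dist_le_path_length:
  assumes "x \<le> y"
  shows "ennreal (dist (g x) (g y)) \<le> path_length g x y"
  unfolding path_length_def
  by (rule SUP_upper2[where i="[x,y]"]) (use assms in auto)

lemma chain_le:
  fixes M :: "real measure"
  assumes sets: "\<And>x y. {x..y} \<in> sets M" "\<And>x y. {x<..y} \<in> sets M" "\<And>x. {x} \<in> sets M"
    and pt: "\<And>x. emeasure M {x} = 0"
    and g: "\<And>x y. a \<le> x \<Longrightarrow> x \<le> y \<Longrightarrow> y \<le> b \<Longrightarrow> G x y \<le> emeasure M {x..y}"
  shows "ts \<noteq> [] \<Longrightarrow> sorted ts \<Longrightarrow> a \<le> hd ts \<Longrightarrow> last ts \<le> b \<Longrightarrow>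
    (\<Sum>i<length ts - 1. G (ts!i) (ts!Suc i)) \<le> emeasure M {hd ts..last ts}"
proof (induction ts rule: induct_list012)
  case 1 then show ?case by simp
next
  case (2 x) then show ?case by simp
next
  case (3 x y zs)
  let ?L = "last (y#zs)"
  have xy: "x \<le> y" and yL: "y \<le> ?L" using "3.prems"(2) by (auto simp: last_in_set)
  have Lb: "?L \<le> b" using "3.prems"(4) by simp
  have ax: "a \<le> x" using "3.prems"(3) by simp
  have IH: "(\<Sum>i<length (y#zs) - 1. G ((y#zs)!i) ((y#zs)!Suc i)) \<le> emeasure M {y..?L}"
    using "3.IH"(2) "3.prems" xy ax by auto
  have sum: "(\<Sum>i<length (x#y#zs) - 1. G ((x#y#zs)!i) ((x#y#zs)!Suc i))
      = G x y + (\<Sum>i<length (y#zs) - 1. G ((y#zs)!i) ((y#zs)!Suc i))"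
    by (simp add: sum.lessThan_Suc_shift del: sum.lessThan_Suc)
  have "emeasure M {y..?L} \<le> emeasure M ({y} \<union> {y<..?L})"
    by (rule emeasure_mono[OF _ sets.Un[OF sets(3) sets(2)]]) auto
  also have "\<dots> \<le> emeasure M {y} + emeasure M {y<..?L}"
    by (rule emeasure_subadditive[OF sets(3) sets(2)])
  finally have yl: "emeasure M {y..?L} \<le> emeasure M {y<..?L}" using pt by simp
  have "G x y + (\<Sum>i<length (y#zs) - 1. G ((y#zs)!i) ((y#zs)!Suc i)) \<le> emeasure M {x..y} + emeasure M {y<..?L}"
    using g[OF ax xy] yL Lb IH yl by (intro add_mono) auto
  also have "\<dots> = emeasure M ({x..y} \<union> {y<..?L})"
    by (rule plus_emeasure) (auto intro: sets)
  also have "{x..y} \<union> {y<..?L} = {x..?L}" using xy yL by auto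
  finally show ?case using sum by simp
qed

theorem lemma2p2:
  fixes \<psi> :: "'y::metric_space \<Rightarrow> 'w::metric_space"
    and \<rho> :: "'y \<Rightarrow> ennreal"
    and \<gamma> :: "real \<Rightarrow> 'y"
    and E :: "'y set"
  assumes "continuous_on UNIV \<psi>"
    and "\<rho> \<in> borel_measurable borel"
    and "abs_continuous_path \<gamma> 0 1"
    and "line_integral \<rho> \<gamma> 0 1 < \<infinity>"
    and "compact E"
    and "hausdorff1 (\<psi> ` E) = 0"
    and "\<And>c d. c \<le> d \<Longrightarrow> {c..d} \<subseteq> {0..1} - {t. \<gamma> t \<in> E} \<Longrightarrow>
           path_length (\<psi> \<circ> \<gamma>) c d \<le> line_integral \<rho> \<gamma> c d"
  shows "path_length (\<psi> \<circ> \<gamma>) 0 1 \<le> line_integral \<rho> \<gamma> 0 1"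
proof -
  have cg: "continuous_on {0..1} \<gamma>" using acp_continuous[OF assms(3)] .
  have cpsi: "continuous_on S \<psi>" for S using assms(1) continuous_on_subset by blast
  define \<sigma> where "\<sigma> = \<psi> \<circ> \<gamma>"
  have cs: "continuous_on {0..1} \<sigma>" unfolding \<sigma>_def by (rule continuous_on_compose[OF cg cpsi])
  define v where "v = metric_speed \<gamma> 0 1"
  define cl where "cl t = max 0 (min 1 t)" for t :: real
  have ccl: "continuous_on UNIV cl" unfolding cl_def by (intro continuous_intros)
  have rcl: "cl ` UNIV \<subseteq> {0..1}" unfolding cl_def by auto
  define \<gamma>' where "\<gamma>' = \<gamma> \<circ> cl"
  have cg': "continuous_on UNIV \<gamma>'" unfolding \<gamma>'_def
    by (rule continuous_on_compose[OF ccl continuous_on_subset[OF cg rcl]])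
  have g'eq: "\<gamma>' t = \<gamma> t" if "t \<in> {0..1}" for t using that unfolding \<gamma>'_def cl_def by auto
  have mg0: "(\<lambda>t. \<rho> (\<gamma>' t)) \<in> borel_measurable borel"
    using measurable_compose[OF borel_measurable_continuous_onI[OF cg'] assms(2)] .
  have mg: "(\<lambda>t. \<rho> (\<gamma>' t)) \<in> borel_measurable lebesgue"
    by (rule measurable_completion) (use mg0 in simp)
  have si: "set_integrable lebesgue {0..1} v" using assms(3) unfolding abs_continuous_path_def v_def by auto
  have mw: "(\<lambda>t. indicator {0..1} t *\<^sub>R v t) \<in> borel_measurable lebesgue"
    using si unfolding set_integrable_def by (rule borel_measurable_integrable)
  define H where "H t = \<rho> (\<gamma>' t) * ennreal (indicator {0..1} t *\<^sub>R v t)" for t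
  have mH: "H \<in> borel_measurable lebesgue"
    unfolding H_def using mg mw by measurable
  define \<mu> where "\<mu> = density lebesgue H"
  have sets_\<mu>: "sets \<mu> = sets lebesgue" by (simp add: \<mu>_def)
  have \<mu>_eq: "emeasure \<mu> A = (\<integral>\<^sup>+ t. H t * indicator A t \<partial>lebesgue)" if "A \<in> sets lebesgue" for A
    unfolding \<mu>_def by (rule emeasure_density[OF mH that])
  have pt: "emeasure \<mu> {x} = 0" for x
  proof -
    have ae: "AE t in lebesgue. t \<notin> {x}" by (rule AE_not_in) simp
    have "emeasure \<mu> {x} = (\<integral>\<^sup>+ t. H t * indicator {x} t \<partial>lebesgue)" by (rule \<mu>_eq) simp
    also have "\<dots> = (\<integral>\<^sup>+ (t::real). 0 \<partial>lebesgue)"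
    proof -
      have "AE t in lebesgue. H t * indicator {x} t = 0" using ae by eventually_elim simp
      then show ?thesis by (rule nn_integral_cong_AE)
    qed
    finally show ?thesis by (simp only: nn_integral_const mult_zero_left)
  qed
  have F2: "line_integral \<rho> \<gamma> c d = emeasure \<mu> {c..d}" if cd: "0 \<le> c" "c \<le> d" "d \<le> 1" for c d
  proof -
    have ae: "AE t in lebesgue. t \<notin> {c,d}" by (rule AE_not_in) simp
    have "line_integral \<rho> \<gamma> c d = (\<integral>\<^sup>+ t. H t * indicator {c..d} t \<partial>lebesgue)"
      unfolding line_integral_def
    proof (rule nn_integral_cong_AE)
      show "AE t in lebesgue. \<rho> (\<gamma> t) * ennreal (metric_speed \<gamma> c d t) * indicator {c..d} t
          = H t * indicator {c..d} t"
        using ae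
      proof eventually_elim
        fix t assume t: "t \<notin> {c,d}"
        show "\<rho> (\<gamma> t) * ennreal (metric_speed \<gamma> c d t) * indicator {c..d} t = H t * indicator {c..d} t"
        proof (cases "t \<in> {c<..<d}")
          case True
          then have "metric_speed \<gamma> c d t = v t" unfolding v_def using speed_local[of 0 c d 1 t \<gamma>] cd by auto
          moreover have "\<gamma>' t = \<gamma> t" using True cd by (intro g'eq) auto
          moreover have "t \<in> {0..1}" "t \<in> {c..d}" using True cd by auto
          ultimately show ?thesis unfolding H_def by simp
        next
          case False with t have "t \<notin> {c..d}" by auto
          then show ?thesis by simp
        qed
      qed
    qed
    also have "\<dots> = emeasure \<mu> {c..d}" by (rule \<mu>_eq[symmetric]) simp
    finally show ?thesis .
  qed
  have fin01: "emeasure \<mu> {0..1} < \<infinity>" using F2[of 0 1] assms(4) by simp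
  have F3: "ennreal (dist (\<sigma> s) (\<sigma> t)) \<le> emeasure \<mu> {s..t}" if st: "0 \<le> s" "s \<le> t" "t \<le> 1" for s t
  proof -
    define f where "f u = dist (\<sigma> s) (\<sigma> u)" for u
    have cs': "continuous_on {s..t} \<sigma>" using continuous_on_subset[OF cs, of "{s..t}"] st by auto
    have cf: "continuous_on {s..t} f" unfolding f_def using cs' by (intro continuous_intros) auto
    have cgst: "continuous_on {s..t} \<gamma>" using continuous_on_subset[OF cg, of "{s..t}"] st by auto
    have cgo: "continuous_on {s<..<t} \<gamma>" by (rule continuous_on_subset[OF cgst]) auto
    have cE: "closed E" using assms(5) compact_imp_closed by blast
    define U where "U = {s<..<t} \<inter> \<gamma> -` (-E)"
    have oU: "open U" unfolding U_def using continuous_open_preimage[OF cgo] cE by auto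
    obtain X :: "nat \<Rightarrow> real set" where dX: "disjoint_family X" and uX: "(\<Union>i. X i) = U"
      and cX: "\<And>i. X i = {} \<or> X i \<in> components U"
      using open_real_disjoint_family[OF oU] by blast
    have XU: "X i \<subseteq> U" for i using uX by blast
    have Ust: "U \<subseteq> {s..t}" unfolding U_def by auto
    have oX: "open (X i)" for i using cX[of i] open_components[OF oU] by auto
    have iX: "is_interval (X i)" for i
      using cX[of i] in_components_connected is_interval_connected_1 by auto
    have mX: "X i \<in> sets lebesgue" for i using oX[of i] by simp
    have mXm: "X i \<in> sets \<mu>" for i using mX sets_\<mu> by simp
    have fin: "emeasure \<mu> (X i) < \<infinity>" for i
    proof -
      have "X i \<subseteq> {0..1}" using XU[of i] Ust st by force
      then have "emeasure \<mu> (X i) \<le> emeasure \<mu> {0..1}"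
        by (rule emeasure_mono) (simp add: sets_\<mu>)
      then show ?thesis using fin01 by (rule le_less_trans)
    qed
    have bnd: "ennreal (dist (\<sigma> x) (\<sigma> y)) \<le> emeasure \<mu> (X i)" if xy: "x \<in> X i" "y \<in> X i" "x \<le> y" for i x y
    proof -
      have sub: "{x..y} \<subseteq> X i"
      proof
        fix z assume z: "z \<in> {x..y}"
        have "\<forall>a\<in>X i. \<forall>b\<in>X i. \<forall>z. a \<le> z \<and> z \<le> b \<longrightarrow> z \<in> X i" using iX[of i] unfolding is_interval_1 .
        then have "x \<le> z \<and> z \<le> y \<longrightarrow> z \<in> X i" using xy(1,2) by blast
        then show "z \<in> X i" using z by simp
      qed
      then have sub2: "{x..y} \<subseteq> {0..1} - {t. \<gamma> t \<in> E}" using XU[of i] st unfolding U_def by auto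
      then have x0: "0 \<le> x" "y \<le> 1" using xy by auto
      have "ennreal (dist (\<sigma> x) (\<sigma> y)) \<le> path_length \<sigma> x y" by (rule dist_le_path_length[OF xy(3)])
      also have "\<dots> \<le> line_integral \<rho> \<gamma> x y" using assms(7)[OF xy(3) sub2] unfolding \<sigma>_def .
      also have "\<dots> = emeasure \<mu> {x..y}" using F2 x0 xy by auto
      also have "\<dots> \<le> emeasure \<mu> (X i)" by (rule emeasure_mono[OF sub mXm])
      finally show ?thesis .
    qed
    have fd: "f x - f y \<le> enn2real (emeasure \<mu> (X i))" if xy: "x \<in> X i" "y \<in> X i" for x y i
    proof -
      have "ennreal (dist (\<sigma> x) (\<sigma> y)) \<le> emeasure \<mu> (X i)"
      proof (cases "x \<le> y")
        case True then show ?thesis using bnd xy by auto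
      next
        case False then show ?thesis using bnd[of y i x] xy by (auto simp: dist_commute)
      qed
      also have "\<dots> = ennreal (enn2real (emeasure \<mu> (X i)))" using fin[of i] by simp
      finally have "dist (\<sigma> x) (\<sigma> y) \<le> enn2real (emeasure \<mu> (X i))" by simp
      moreover have "f x - f y \<le> dist (\<sigma> x) (\<sigma> y)"
        unfolding f_def using dist_triangle[of "\<sigma> s" "\<sigma> x" "\<sigma> y"] dist_commute[of "\<sigma> y" "\<sigma> x"] by linarith
      ultimately show ?thesis by linarith
    qed
    have bnds: "bounded (f ` {s..t})" using compact_continuous_image[OF cf compact_Icc] compact_imp_bounded by blast
    have XI: "f ` X i \<subseteq> f ` {s..t}" for i using XU[of i] Ust by (intro image_mono) blast
    have bddA: "bdd_above (f ` X i)" for i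
      using bdd_above_mono[OF bounded_imp_bdd_above[OF bnds] XI] .
    have bddB: "bdd_below (f ` X i)" for i
      using bdd_below_mono[OF bounded_imp_bdd_below[OF bnds] XI] .
    define Y where "Y i = (if X i = {} then {} else {Inf (f ` X i) .. Sup (f ` X i)})" for i
    have fY: "f u \<in> Y i" if "u \<in> X i" for u i
      using that cInf_lower[OF imageI[OF that] bddB] cSup_upper[OF imageI[OF that] bddA]
      unfolding Y_def by auto
    have mY: "Y i \<in> sets lborel" for i unfolding Y_def by auto
    have Ym: "emeasure lborel (Y i) \<le> emeasure \<mu> (X i)" for i
    proof (cases "X i = {}")
      case True then show ?thesis unfolding Y_def by simp
    next
      case False
      define r where "r = enn2real (emeasure \<mu> (X i))"
      have "Sup (f ` X i) \<le> Inf (f ` X i) + r"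
      proof (rule cSup_least)
        show "f ` X i \<noteq> {}" using False by simp
        fix z assume "z \<in> f ` X i"
        then obtain x where x: "x \<in> X i" "z = f x" by auto
        have "f x - r \<le> Inf (f ` X i)"
        proof (rule cInf_greatest)
          show "f ` X i \<noteq> {}" using False by simp
          fix w assume "w \<in> f ` X i"
          then obtain y where y: "y \<in> X i" "w = f y" by auto
          show "f x - r \<le> w" using fd[OF x(1) y(1)] y(2) unfolding r_def by simp
        qed
        then show "z \<le> Inf (f ` X i) + r" using x by simp
      qed
      moreover have "Inf (f ` X i) \<le> Sup (f ` X i)" using False bddA bddB by (intro cInf_le_cSup) auto
      ultimately have "emeasure lborel (Y i) \<le> ennreal r" unfolding Y_def using False by simp
      also have "\<dots> = emeasure \<mu> (X i)" unfolding r_def using fin[of i] by simp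
      finally show ?thesis .
    qed
    have YU: "emeasure lborel (\<Union>i. Y i) \<le> emeasure \<mu> {s..t}"
    proof -
      have "emeasure lborel (\<Union>i. Y i) \<le> (\<Sum>i. emeasure lborel (Y i))"
        by (rule emeasure_subadditive_countably) (use mY in auto)
      also have "\<dots> \<le> (\<Sum>i. emeasure \<mu> (X i))" by (intro suminf_le Ym summableI)
      also have "\<dots> = emeasure \<mu> (\<Union>i. X i)" by (rule suminf_emeasure) (use mXm dX in auto)
      also have "\<dots> \<le> emeasure \<mu> {s..t}" by (rule emeasure_mono) (use uX Ust sets_\<mu> in auto)
      finally show ?thesis .
    qed
    have main: "ennreal (f t) \<le> emeasure \<mu> {s..t} + ennreal e" if e: "0 < e" for e
    proof -
      have "hausdorff1_pre 1 (\<psi> ` E) \<le> hausdorff1 (\<psi> ` E)" unfolding hausdorff1_def by (rule SUP_upper) simp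
      then have "hausdorff1_pre 1 (\<psi> ` E) < ennreal (e/2)" using assms(6) e by simp
      then obtain C where C: "\<psi> ` E \<subseteq> (\<Union>i. C i)" "\<And>i. ediam (C i) \<le> ennreal 1"
        and Cs: "(\<Sum>i. ediam (C i)) < ennreal (e/2)"
        unfolding hausdorff1_pre_def INF_less_iff by auto
      define \<phi> where "\<phi> w = dist (\<sigma> s) w" for w
      define c where "c i = (SOME x. x \<in> C i)" for i
      define r where "r i = enn2real (ediam (C i))" for i
      have er: "ediam (C i) = ennreal (r i)" for i
        unfolding r_def using ennreal_enn2real[OF le_less_trans[OF C(2)[of i] ennreal_less_top]] by simp
      have r0: "r i \<ge> 0" for i unfolding r_def by simp
      define B where "B i = (if C i = {} then {} else {\<phi> (c i) - r i .. \<phi> (c i) + r i})" for i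
      have inB: "\<phi> w \<in> B i" if w: "w \<in> C i" for w i
      proof -
        have ci: "c i \<in> C i" using w unfolding c_def by (rule someI)
        have "ennreal (dist w (c i)) \<le> ediam (C i)" unfolding ediam_def
          by (rule SUP_upper2[OF w], rule SUP_upper[OF ci])
        then have d: "dist w (c i) \<le> r i" using er r0 by simp
        have "\<bar>\<phi> w - \<phi> (c i)\<bar> \<le> dist w (c i)" unfolding \<phi>_def
          using abs_dist_diff_le[of w "\<sigma> s" "c i"] by (simp add: dist_commute)
        then show ?thesis unfolding B_def using w d by auto
      qed
      have mB: "B i \<in> sets lborel" for i unfolding B_def by auto
      have Bm: "emeasure lborel (B i) \<le> 2 * ediam (C i)" for i
      proof (cases "C i = {}")
        case True then show ?thesis unfolding B_def by simp
      next
        case False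
        then have "emeasure lborel (B i) = ennreal (2 * r i)" unfolding B_def using r0[of i] by simp
        also have "\<dots> = 2 * ediam (C i)" using er[of i] r0[of i] by (simp add: ennreal_mult)
        finally show ?thesis by simp
      qed
      have BU: "emeasure lborel (\<Union>i. B i) \<le> ennreal e"
      proof -
        have "emeasure lborel (\<Union>i. B i) \<le> (\<Sum>i. emeasure lborel (B i))"
          by (rule emeasure_subadditive_countably) (use mB in auto)
        also have "\<dots> \<le> (\<Sum>i. 2 * ediam (C i))" by (intro suminf_le Bm summableI)
        also have "\<dots> = 2 * (\<Sum>i. ediam (C i))" by simp
        also have "\<dots> \<le> 2 * ennreal (e/2)" using Cs by (intro mult_left_mono) auto
        also have "\<dots> = ennreal e" using ennreal_mult[of 2 "e/2"] e by simp
        finally show ?thesis .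
      qed
      have f0: "f s = 0" unfolding f_def by simp
      have cover: "{0 .. f t} \<subseteq> ((\<Union>i. B i) \<union> (\<Union>i. Y i)) \<union> {f s, f t}"
      proof
        fix y assume y: "y \<in> {0..f t}"
        obtain u where u: "s \<le> u" "u \<le> t" "f u = y" using IVT'[of f s y t] y cf st f0 by auto
        show "y \<in> ((\<Union>i. B i) \<union> (\<Union>i. Y i)) \<union> {f s, f t}"
        proof (cases "u = s \<or> u = t")
          case True then show ?thesis using u by auto
        next
          case False
          then have us: "u \<in> {s<..<t}" using u by auto
          show ?thesis
          proof (cases "\<gamma> u \<in> E")
            case True
            then obtain i where "\<psi> (\<gamma> u) \<in> C i" using C(1) by blast
            then have "\<phi> (\<psi> (\<gamma> u)) \<in> B i" by (rule inB)
            moreover have "\<phi> (\<psi> (\<gamma> u)) = y" using u unfolding \<phi>_def f_def \<sigma>_def by simp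
            ultimately show ?thesis by blast
          next
            case False
            then have "u \<in> U" using us unfolding U_def by auto
            then obtain i where "u \<in> X i" using uX by blast
            then have "y \<in> Y i" using fY u by blast
            then show ?thesis by blast
          qed
        qed
      qed
      have ft0: "f t \<ge> 0" unfolding f_def by simp
      have mBY: "(\<Union>i. B i) \<union> (\<Union>i. Y i) \<in> sets lborel"
        using mB mY by (intro sets.Un sets.countable_UN) auto
      have "ennreal (f t) = emeasure lborel {0 .. f t}" using ft0 by simp
      also have "\<dots> \<le> emeasure lborel (((\<Union>i. B i) \<union> (\<Union>i. Y i)) \<union> {f s, f t})"
        by (rule emeasure_mono[OF cover]) (use mBY in auto)
      also have "\<dots> \<le> emeasure lborel ((\<Union>i. B i) \<union> (\<Union>i. Y i)) + emeasure lborel {f s, f t}"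
        by (rule emeasure_subadditive[OF mBY]) auto
      also have "emeasure lborel {f s, f t} = 0" by (rule emeasure_lborel_countable) simp
      also have "emeasure lborel ((\<Union>i. B i) \<union> (\<Union>i. Y i)) \<le> emeasure lborel (\<Union>i. B i) + emeasure lborel (\<Union>i. Y i)"
        by (rule emeasure_subadditive) (use mB mY in \<open>auto intro: sets.countable_UN\<close>)
      finally have "ennreal (f t) \<le> emeasure lborel (\<Union>i. B i) + emeasure lborel (\<Union>i. Y i)" by simp
      also have "\<dots> \<le> ennreal e + emeasure \<mu> {s..t}" by (intro add_mono BU YU)
      finally show ?thesis by (simp add: add.commute)
    qed
    have "ennreal (f t) \<le> emeasure \<mu> {s..t}" by (rule ennreal_le_epsilon) (use main in auto)
    then show ?thesis unfolding f_def .
  qed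
  have S1: "{x..y} \<in> sets \<mu>" "{x<..y} \<in> sets \<mu>" "{x} \<in> sets \<mu>" for x y :: real
    by (simp_all add: sets_\<mu>)
  have G: "ennreal (dist (\<sigma> x) (\<sigma> y)) \<le> emeasure \<mu> {x..y}" if "0 \<le> x" "x \<le> y" "y \<le> 1" for x y
    using F3[OF that] .
  have pl: "path_length \<sigma> 0 1 \<le> emeasure \<mu> {0..1}"
    unfolding path_length_def
  proof (rule SUP_least)
    fix ts :: "real list" assume "ts \<in> {ts. ts \<noteq> [] \<and> hd ts = 0 \<and> last ts = 1 \<and> sorted ts}"
    then have ts: "ts \<noteq> []" "hd ts = 0" "last ts = 1" "sorted ts" by auto
    have "(\<Sum>i<length ts - 1. ennreal (dist (\<sigma> (ts!i)) (\<sigma> (ts!Suc i)))) \<le> emeasure \<mu> {hd ts..last ts}"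
      by (rule chain_le[where a=0 and b=1 and M=\<mu> and G="\<lambda>x y. ennreal (dist (\<sigma> x) (\<sigma> y))",
            OF S1(1) S1(2) S1(3) pt G ts(1) ts(4)]) (simp_all add: ts(2,3))
    then show "(\<Sum>i<length ts - 1. ennreal (dist (\<sigma> (ts!i)) (\<sigma> (ts!Suc i)))) \<le> emeasure \<mu> {0..1}"
      by (simp only: ts(2,3))
  qed
  have F01: "line_integral \<rho> \<gamma> 0 1 = emeasure \<mu> {0..1}" by (rule F2) simp_all
  have "path_length (\<psi> \<circ> \<gamma>) 0 1 \<le> emeasure \<mu> {0..1}" using pl unfolding \<sigma>_def .
  then show ?thesis by (simp only: F01)
qed

end
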